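(* For every $\varepsilon>0$ and $\Delta>0$ there exists $c>0$ such that the following holds. Let $G$ be a connected graph on vertex set $[n]$ with maximum degree at most $\Delta$, let $R\sim G(n,\varepsilon/n)$ and $G^*=G\cup R$. Then asymptotically almost surely $G^*$ contains a path of length at least $cn$.
   Context: $G(n,p)$ denotes the binomial random graph on $[n]$ with each pair an edge independently with probability $p$; $G\cup R$ is the graph on $[n]$ with edge set the union of those of $G$ and $R$. Asymptotically almost surely means with probability tending to $1$ as $n\to\infty$, for an arbitrary sequence of such graphs $G=G_n$. *)

theory Defs
  imports "HOL-Probability.Probability"
begin

text \<open>Simple graphs on vertex set [n] = {0..<n}, represented by their edge sets:
  an edge is a 2-element set {u,v} with u \<noteq> v.\<close>

definition all_pairs :: "nat \<Rightarrow> nat set set" where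
  "all_pairs n = {{i, j} | i j. i < j \<and> j < n}"

definition is_graph :: "nat \<Rightarrow> nat set set \<Rightarrow> bool" where
  "is_graph n E \<longleftrightarrow> E \<subseteq> all_pairs n"

definition degree :: "nat set set \<Rightarrow> nat \<Rightarrow> nat" where
  "degree E u = card {v. {u, v} \<in> E}"

definition max_degree_le :: "nat \<Rightarrow> nat set set \<Rightarrow> real \<Rightarrow> bool" where
  "max_degree_le n E D \<longleftrightarrow> (\<forall>u<n. real (degree E u) \<le> D)"

definition connected_graph :: "nat \<Rightarrow> nat set set \<Rightarrow> bool" where
  "connected_graph n E \<longleftrightarrow>
     (\<forall>u<n. \<forall>v<n. (u, v) \<in> {(x, y). {x, y} \<in> E}\<^sup>*)"

definition is_path :: "nat \<Rightarrow> nat set set \<Rightarrow> nat list \<Rightarrow> bool" where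
  "is_path n E vs \<longleftrightarrow> vs \<noteq> [] \<and> distinct vs \<and> set vs \<subseteq> {..<n} \<and>
     (\<forall>i. Suc i < length vs \<longrightarrow> {vs ! i, vs ! Suc i} \<in> E)"

definition has_path_of_length_ge :: "nat \<Rightarrow> nat set set \<Rightarrow> real \<Rightarrow> bool" where
  "has_path_of_length_ge n E L \<longleftrightarrow> (\<exists>vs. is_path n E vs \<and> real (length vs - 1) \<ge> L)"

text \<open>The binomial random graph G(n,p): each pair in [n] independently an edge with
  probability p (bernoulli_pmf clamps p into [0,1]).\<close>

definition gnp :: "nat \<Rightarrow> real \<Rightarrow> nat set set pmf" where
  "gnp n p = map_pmf (\<lambda>b. {e \<in> all_pairs n. b e})
                     (Pi_pmf (all_pairs n) False (\<lambda>_. bernoulli_pmf p))"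

end

theory Submission
  imports Defs "HOL-Real_Asymp.Real_Asymp"
begin



definition valid :: "nat \<Rightarrow> nat set set \<Rightarrow> nat set \<Rightarrow> nat set \<Rightarrow> nat list \<Rightarrow> bool" where
  "valid n E S T U \<longleftrightarrow> S \<inter> T = {} \<and> S \<inter> set U = {} \<and> T \<inter> set U = {} \<and>
     S \<union> T \<union> set U = {..<n} \<and> distinct U \<and>
     (\<forall>i. Suc i < length U \<longrightarrow> {U ! i, U ! Suc i} \<in> E) \<and> (\<forall>s\<in>S. \<forall>t\<in>T. {s,t} \<notin> E)"

lemma valid_step:
  assumes v: "valid n E S T U" and c: "card T > card S"
  shows "\<exists>S' T' U'. valid n E S' T' U' \<and> card S' + card T = card T' + card S + 1"
proof -
  have fin: "finite S" "finite T" using v unfolding valid_def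
    by (metis finite_Un finite_lessThan)+
  show ?thesis
  proof (cases "U = []")
    case True
    from c obtain v where vT: "v \<in> T" by (metis card.empty empty_iff less_nat_zero_code subsetI subset_antisym)
    have "valid n E S (T - {v}) [v]" using v vT True unfolding valid_def by auto
    moreover have "card (T - {v}) + 1 = card T" using vT fin
      by (metis card_Suc_Diff1 Suc_eq_plus1)
    ultimately show ?thesis by (metis add.commute add.left_commute)
  next
    case False
    define w where "w = last U"
    have wU: "w \<in> set U" using False w_def by simp
    show ?thesis
    proof (cases "\<exists>x\<in>T. {w, x} \<in> E")
      case True
      then obtain x where xT: "x \<in> T" and wx: "{w,x} \<in> E" by blast
      have "valid n E S (T - {x}) (U @ [x])"
        unfolding valid_def
      proof (intro conjI)
        show "\<forall>i. Suc i < length (U @ [x]) \<longrightarrow> {(U @ [x]) ! i, (U @ [x]) ! Suc i} \<in> E"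
        proof (intro allI impI)
          fix i assume i: "Suc i < length (U @ [x])"
          show "{(U @ [x]) ! i, (U @ [x]) ! Suc i} \<in> E"
          proof (cases "Suc i < length U")
            case True then show ?thesis using v unfolding valid_def by (simp add: nth_append)
          next
            case False
            then have "Suc i = length U" using i by simp
            then have "i = length U - 1" by simp
            then show ?thesis using wx w_def False \<open>Suc i = length U\<close>
              by (simp add: nth_append last_conv_nth[OF \<open>U \<noteq> []\<close>])
          qed
        qed
      qed (use v xT in \<open>auto simp: valid_def\<close>)
      moreover have "card (T - {x}) + 1 = card T" using xT fin
        by (metis card_Suc_Diff1 Suc_eq_plus1)
      ultimately show ?thesis by (metis add.commute add.left_commute)
    next
      case False
      have U: "U = butlast U @ [w]" using \<open>U \<noteq> []\<close> w_def by simp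
      have dU: "distinct (butlast U @ [w])" using v U unfolding valid_def by metis
      have "valid n E (insert w S) T (butlast U)"
        unfolding valid_def
      proof (intro conjI)
        show "\<forall>i. Suc i < length (butlast U) \<longrightarrow> {butlast U ! i, butlast U ! Suc i} \<in> E"
          using v unfolding valid_def by (simp add: nth_butlast)
        have "set U = insert w (set (butlast U))" using U by (metis set_append empty_set list.simps(15) Un_insert_right sup_bot.right_neutral)
        then show "insert w S \<union> T \<union> set (butlast U) = {..<n}" using v unfolding valid_def by auto
        show "\<forall>s\<in>insert w S. \<forall>t\<in>T. {s, t} \<notin> E" using v False unfolding valid_def by auto
        show "insert w S \<inter> set (butlast U) = {}" using v dU unfolding valid_def
          by (smt (verit, best) Int_insert_left_if0 U disjoint_iff distinct_append in_set_butlastD list.set_intros(1))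
        show "insert w S \<inter> T = {}" using v wU unfolding valid_def by auto
        show "T \<inter> set (butlast U) = {}" using v unfolding valid_def by (auto dest: in_set_butlastD)
        show "distinct (butlast U)" using v unfolding valid_def by (simp add: distinct_butlast)
      qed
      moreover have "w \<notin> S" using v wU unfolding valid_def by auto
      moreover have "card (insert w S) = card S + 1" using fin \<open>w \<notin> S\<close> by simp
      ultimately show ?thesis by (intro exI[of _ "insert w S"] exI[of _ T] exI[of _ "butlast U"]) simp
    qed
  qed
qed

lemma valid_reach:
  "valid n E S T U \<Longrightarrow> card S \<le> card T \<Longrightarrow> \<exists>S' T' U'. valid n E S' T' U' \<and> card S' = card T'"
proof (induction "card T - card S" arbitrary: S T U)
  case 0
  then show ?case by (metis diff_is_0_eq le_antisym)
next
  case (Suc k)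
  then obtain S' T' U' where v: "valid n E S' T' U'" and c: "card S' + card T = card T' + card S + 1"
    using valid_step[of n E S T U] Suc.hyps(2) Suc.prems by (metis zero_less_Suc zero_less_diff)
  have "k = card T' - card S'" "card S' \<le> card T'" using Suc.hyps(2) c by arith+
  then show ?case using Suc.hyps(1) v by blast
qed

lemma dfs: "\<exists>S T U. valid n E S T U \<and> card S = card T"
proof -
  have "valid n E {} {..<n} []" unfolding valid_def by auto
  then show ?thesis using valid_reach by fastforce
qed

lemma dfs_path:
  assumes "\<not> has_path_of_length_ge n E L" and L0: "L \<ge> 0"
  shows "\<exists>S T U. valid n E S T U \<and> card S = card T \<and> real (length U) < L + 1"
proof -
  obtain S T U where v: "valid n E S T U" and c: "card S = card T" using dfs by blast
  have "real (length U) < L + 1"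
  proof (cases "U = []")
    case True
    then show ?thesis using L0 by simp
  next
    case False
    then have "is_path n E U" using v unfolding valid_def is_path_def by auto
    then have "\<not> real (length U - 1) \<ge> L" using assms unfolding has_path_of_length_ge_def by auto
    then show ?thesis using False by (simp add: of_nat_diff)
  qed
  then show ?thesis using v c by blast
qed




lemma sum_pow_card:
  fixes x :: real
  shows "finite A \<Longrightarrow> (\<Sum>U\<in>Pow A. x ^ card U) = (1 + x) ^ card A"
proof (induction A rule: finite_induct)
  case empty
  then show ?case by simp
next
  case (insert a A)
  have d: "Pow A \<inter> insert a ` Pow A = {}" using insert by auto
  have inj: "inj_on (insert a) (Pow A)" using insert unfolding inj_on_def by (auto simp: insert_ident)
  have "(\<Sum>U\<in>Pow (insert a A). x ^ card U) = (\<Sum>U\<in>Pow A. x ^ card U) + (\<Sum>U\<in>insert a ` Pow A. x ^ card U)"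
    unfolding Pow_insert using insert d by (intro sum.union_disjoint) auto
  also have "(\<Sum>U\<in>insert a ` Pow A. x ^ card U) = (\<Sum>U\<in>Pow A. x ^ card (insert a U))"
    using inj by (simp add: sum.reindex)
  also have "\<dots> = (\<Sum>U\<in>Pow A. x * x ^ card U)"
  proof (intro sum.cong refl)
    fix U assume "U \<in> Pow A"
    then have "a \<notin> U" "finite U" using insert by (auto intro: finite_subset)
    then show "x ^ card (insert a U) = x * x ^ card U" by simp
  qed
  finally show ?case using insert by (simp add: sum_distrib_left[symmetric] algebra_simps)
qed

lemma count_small_subsets:
  fixes x L :: real
  assumes x: "0 < x" "x \<le> 1"
  shows "real (card {U. U \<subseteq> {..<n} \<and> real (card U) < L}) \<le> x powr (-L) * (1 + x) ^ n"
proof -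
  let ?A = "{U. U \<subseteq> {..<n} \<and> real (card U) < L}"
  have sub: "?A \<subseteq> Pow {..<n}" by auto
  have "real (card ?A) = (\<Sum>U\<in>?A. 1)" by simp
  also have "\<dots> \<le> (\<Sum>U\<in>?A. x powr (-L) * x ^ card U)"
  proof (intro sum_mono)
    fix U assume "U \<in> ?A"
    then have "real (card U) \<le> L" by auto
    then have "x powr L \<le> x powr (real (card U))" using x by (intro powr_mono') auto
    then have "x powr L \<le> x ^ card U" using x by (simp add: powr_realpow)
    then have "x powr (-L) * x powr L \<le> x powr (-L) * x ^ card U" using x by (intro mult_left_mono) auto
    moreover have "x powr (-L) * x powr L = 1" using x by (simp add: powr_add[symmetric])
    ultimately show "1 \<le> x powr (-L) * x ^ card U" by simp
  qed
  also have "\<dots> \<le> (\<Sum>U\<in>Pow {..<n}. x powr (-L) * x ^ card U)"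
    using sub x by (intro sum_mono2) auto
  also have "\<dots> = x powr (-L) * (1 + x) ^ n"
    by (simp add: sum_distrib_left[symmetric] sum_pow_card)
  finally show ?thesis .
qed




lemma all_pairs_mem: "{a, b} \<in> all_pairs n \<Longrightarrow> a < n \<and> b < n \<and> a \<noteq> b"
  unfolding all_pairs_def by (auto simp: doubleton_eq_iff)

lemma all_pairs_memI: "a < n \<Longrightarrow> b < n \<Longrightarrow> a \<noteq> b \<Longrightarrow> {a, b} \<in> all_pairs n"
  unfolding all_pairs_def by (cases "a < b") (auto simp: doubleton_eq_iff, metis insert_commute linorder_neqE_nat)

definition nbr :: "nat set set \<Rightarrow> nat set \<Rightarrow> nat set" where
  "nbr G U = {v. \<exists>u\<in>U. {u, v} \<in> G}"

definition FF :: "nat \<Rightarrow> nat set set \<Rightarrow> real \<Rightarrow> real \<Rightarrow> (nat set \<times> nat set) set" where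
  "FF n G L A = {(S, T). S \<subseteq> {..<n} \<and> T \<subseteq> {..<n} \<and> S \<inter> T = {} \<and>
      real (card ({..<n} - S - T)) < L \<and> T \<noteq> {} \<and> (\<forall>s\<in>S. \<forall>t\<in>T. {s, t} \<notin> G) \<and>
      A \<le> real (card S) * real (card T)}"

lemma side_lemma:
  assumes G: "is_graph n G"
    and S1: "S1 \<union> T1 \<union> U = {..<n}" "\<forall>s\<in>S1. \<forall>t\<in>T1. {s, t} \<notin> G"
    and S2: "S2 \<union> T2 \<union> U = {..<n}" "\<forall>s\<in>S2. \<forall>t\<in>T2. {s, t} \<notin> G"
    and U1: "U \<inter> (S1 \<union> T1) = {}" and U2: "U \<inter> (S2 \<union> T2) = {}"
    and d1: "S1 \<inter> T1 = {}" and d2: "S2 \<inter> T2 = {}"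
    and x: "x \<in> S1 \<inter> T2"
    and r: "(x, z) \<in> {(a, b). {a, b} \<in> G}\<^sup>*"
  shows "z \<in> S1 \<inter> T2 \<or> (\<exists>y\<in>S1 \<inter> T2. y \<in> nbr G U)"
  using r
proof (induction rule: rtrancl_induct)
  case base
  then show ?case using x by simp
next
  case (step z z')
  show ?case
  proof (cases "z \<in> S1 \<inter> T2")
    case False
    then show ?thesis using step.IH by blast
  next
    case True
    have e: "{z, z'} \<in> G" using step.hyps(2) by simp
    then have "z' < n" using G all_pairs_mem unfolding is_graph_def by blast
    show ?thesis
    proof (cases "z' \<in> U")
      case True
      have "{z', z} \<in> G" using e by (simp add: insert_commute)
      then have "z \<in> nbr G U" unfolding nbr_def using True by blast
      then show ?thesis using \<open>z \<in> S1 \<inter> T2\<close> by blast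
    next
      case False
      have zz: "z \<in> S1" "z \<in> T2" using True by auto
      have "z' \<notin> T1" using S1(2) zz e by blast
      moreover have "z' \<notin> S2" using S2(2) zz e by (auto simp: insert_commute)
      ultimately have "z' \<in> S1 \<inter> T2" using S1(1) S2(1) False \<open>z' < n\<close> by blast
      then show ?thesis by blast
    qed
  qed
qed

lemma FF_inj:
  assumes G: "is_graph n G" and con: "connected_graph n G"
  shows "inj_on (\<lambda>(S, T). ({..<n} - S - T, S \<inter> nbr G ({..<n} - S - T))) (FF n G L A)"
proof (rule inj_onI, clarify)
  fix S1 T1 S2 T2
  assume F1: "(S1, T1) \<in> FF n G L A" and F2: "(S2, T2) \<in> FF n G L A"
    and eqU: "{..<n} - S1 - T1 = {..<n} - S2 - T2"
    and eqN: "S1 \<inter> nbr G ({..<n} - S1 - T1) = S2 \<inter> nbr G ({..<n} - S2 - T2)"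
  define U where "U = {..<n} - S1 - T1"
  have main: "S \<subseteq> S'" if 
    a: "(S, T) \<in> FF n G L A" "(S', T') \<in> FF n G L A"
    "{..<n} - S - T = U" "{..<n} - S' - T' = U" "S \<inter> nbr G U = S' \<inter> nbr G U" for S T S' T'
  proof
    fix x assume xS: "x \<in> S"
    show "x \<in> S'"
    proof (rule ccontr)
      assume "x \<notin> S'"
      from a(1,2) have p: "S \<subseteq> {..<n}" "T \<subseteq> {..<n}" "S \<inter> T = {}" "T \<noteq> {}" "\<forall>s\<in>S. \<forall>t\<in>T. {s, t} \<notin> G"
         "S' \<subseteq> {..<n}" "T' \<subseteq> {..<n}" "S' \<inter> T' = {}" "\<forall>s\<in>S'. \<forall>t\<in>T'. {s, t} \<notin> G"
        unfolding FF_def by auto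
      have xT': "x \<in> T'" using xS p a(3,4) \<open>x \<notin> S'\<close> by blast
      obtain z where zT: "z \<in> T" using p by blast
      have "(x, z) \<in> {(a, b). {a, b} \<in> G}\<^sup>*" using con xS zT p unfolding connected_graph_def by blast
      from side_lemma[OF G _ p(5) _ p(9) _ _ p(3) p(8) _ this, of U]
      have "z \<in> S \<inter> T' \<or> (\<exists>y\<in>S \<inter> T'. y \<in> nbr G U)" using a(3,4) p xS xT' by blast
      then show False using zT p a(5) by blast
    qed
  qed
  have u1: "{..<n} - S1 - T1 = U" and u2: "{..<n} - S2 - T2 = U" using U_def eqU by simp_all
  have nn: "S1 \<inter> nbr G U = S2 \<inter> nbr G U" using eqN u1 u2 by simp
  have "S1 \<subseteq> S2" by (rule main[OF F1 F2 u1 u2 nn])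
  moreover have "S2 \<subseteq> S1" by (rule main[OF F2 F1 u2 u1 nn[symmetric]])
  ultimately have "S1 = S2" by blast
  moreover have "T1 = T2"
  proof -
    have "T1 = {..<n} - U - S1" "T2 = {..<n} - U - S2" using F1 F2 eqU unfolding U_def FF_def by auto
    then show ?thesis using \<open>S1 = S2\<close> by simp
  qed
  ultimately show "S1 = S2 \<and> T1 = T2" by simp
qed




lemma nbr_sub: "is_graph n G \<Longrightarrow> nbr G U \<subseteq> {..<n}"
  unfolding nbr_def is_graph_def using all_pairs_mem by blast

lemma card_nbr:
  assumes G: "is_graph n G" and D: "max_degree_le n G D" and U: "U \<subseteq> {..<n}"
  shows "real (card (nbr G U)) \<le> real (card U) * D"
proof -
  have fU: "finite U" using U finite_subset by blast
  have "nbr G U = (\<Union>u\<in>U. {v. {u, v} \<in> G})" unfolding nbr_def by blast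
  then have "card (nbr G U) \<le> (\<Sum>u\<in>U. card {v. {u, v} \<in> G})"
    using fU by (simp add: card_UN_le)
  then have "real (card (nbr G U)) \<le> (\<Sum>u\<in>U. real (degree G u))"
    unfolding degree_def by (metis of_nat_le_iff of_nat_sum)
  also have "\<dots> \<le> (\<Sum>u\<in>U. D)"
    using D U unfolding max_degree_le_def by (intro sum_mono) auto
  also have "\<dots> = real (card U) * D" by simp
  finally show ?thesis .
qed

lemma card_FF:
  assumes G: "is_graph n G" and con: "connected_graph n G" and D: "max_degree_le n G D"
    and D0: "D \<ge> 0"
  shows "real (card (FF n G L A)) \<le> real (card {U. U \<subseteq> {..<n} \<and> real (card U) < L}) * 2 powr (D * L)"
proof -
  let ?UU = "{U. U \<subseteq> {..<n} \<and> real (card U) < L}"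
  let ?Sg = "Sigma ?UU (\<lambda>U. Pow (nbr G U))"
  let ?f = "\<lambda>(S, T). ({..<n} - S - T, S \<inter> nbr G ({..<n} - S - T))"
  have fUU: "finite ?UU" by (rule finite_subset[of _ "Pow {..<n}"]) auto
  have fN: "\<And>U. finite (nbr G U)" using nbr_sub[OF G] finite_subset by blast
  have fSg: "finite ?Sg" using fUU fN by auto
  have img: "?f ` FF n G L A \<subseteq> ?Sg" unfolding FF_def by auto
  have "card (FF n G L A) \<le> card ?Sg"
    by (rule card_inj_on_le[OF FF_inj[OF G con] img fSg])
  also have "card ?Sg = (\<Sum>U\<in>?UU. 2 ^ card (nbr G U))"
    using fUU fN by (simp add: card_SigmaI card_Pow)
  finally have "real (card (FF n G L A)) \<le> (\<Sum>U\<in>?UU. 2 powr real (card (nbr G U)))"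
    by (metis (mono_tags, lifting) of_nat_le_iff of_nat_sum powr_realpow of_nat_numeral of_nat_power sum.cong zero_less_numeral)
  also have "\<dots> \<le> (\<Sum>U\<in>?UU. 2 powr (D * L))"
  proof (intro sum_mono)
    fix U assume "U \<in> ?UU"
    then have U: "U \<subseteq> {..<n}" "real (card U) < L" by auto
    have "real (card (nbr G U)) \<le> real (card U) * D" by (rule card_nbr[OF G D U(1)])
    also have "\<dots> \<le> L * D" using U(2) D0 by (intro mult_right_mono) auto
    finally show "2 powr real (card (nbr G U)) \<le> 2 powr (D * L)" by (simp add: mult.commute)
  qed
  also have "\<dots> = real (card ?UU) * 2 powr (D * L)" by simp
  finally show ?thesis .
qed



lemma finite_all_pairs: "finite (all_pairs n)"
proof -
  have "all_pairs n \<subseteq> Pow {..<n}" unfolding all_pairs_def by auto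
  then show ?thesis by (rule finite_subset) auto
qed

lemma prob_no_edge:
  assumes S: "S \<subseteq> {..<n}" and T: "T \<subseteq> {..<n}" and d: "S \<inter> T = {}"
    and p: "0 \<le> p" "p \<le> 1"
  shows "measure_pmf.prob (gnp n p) {R. \<forall>s\<in>S. \<forall>t\<in>T. {s, t} \<notin> R} \<le> exp (- p * (real (card S) * real (card T)))"
proof -
  define E where "E = (\<lambda>(s, t). {s, t::nat}) ` (S \<times> T)"
  define B where "B = (\<lambda>e. if e \<in> E then {False} else (UNIV :: bool set))"
  have EAP: "E \<subseteq> all_pairs n" unfolding E_def using S T d by (auto intro!: all_pairs_memI)
  have fS: "finite S" "finite T" using S T finite_subset by blast+
  have inj: "inj_on (\<lambda>(s, t). {s, t::nat}) (S \<times> T)"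
    using d unfolding inj_on_def by (auto simp: doubleton_eq_iff)
  have cE: "card E = card S * card T" unfolding E_def using inj
    by (simp add: card_image card_cartesian_product)
  have pre: "(\<lambda>b. {e \<in> all_pairs n. b e}) -` {R. \<forall>s\<in>S. \<forall>t\<in>T. {s, t} \<notin> R} = Pi (all_pairs n) B"
    using EAP unfolding B_def E_def Pi_def by auto
  have "measure_pmf.prob (gnp n p) {R. \<forall>s\<in>S. \<forall>t\<in>T. {s, t} \<notin> R}
        = measure_pmf.prob (Pi_pmf (all_pairs n) False (\<lambda>_. bernoulli_pmf p)) (Pi (all_pairs n) B)"
    unfolding gnp_def measure_map_pmf pre ..
  also have "\<dots> = (\<Prod>e\<in>all_pairs n. measure_pmf.prob (bernoulli_pmf p) (B e))"
    by (rule measure_Pi_pmf_Pi[OF finite_all_pairs])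
  also have "\<dots> = (\<Prod>e\<in>all_pairs n. if e \<in> E then 1 - p else 1)"
    using p by (intro prod.cong) (auto simp: B_def measure_pmf_single)
  also have "\<dots> = (1 - p) ^ card E"
    using EAP finite_all_pairs
    by (simp add: prod.If_cases Int_absorb1 Int_commute[of _ "{x. x \<in> E}"] )
  also have "\<dots> \<le> exp (- p) ^ card E"
    using p by (intro power_mono) (auto simp: exp_ge_add_one_self[of "-p", simplified])
  also have "\<dots> = exp (- p * (real (card S) * real (card T)))"
    by (simp add: cE exp_of_nat_mult[symmetric] mult.commute)
  finally show ?thesis .
qed



lemma bad_subset:
  assumes G: "is_graph n G" and c: "0 \<le> c" "c \<le> 1/2" and n: "n \<ge> 6"
  shows "{R. \<not> has_path_of_length_ge n (G \<union> R) (c * real n)}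
     \<subseteq> (\<Union>(S, T)\<in>FF n G (c * real n + 1) (((real n - c * real n - 1) / 2)^2).
            {R. \<forall>s\<in>S. \<forall>t\<in>T. {s, t} \<notin> R})"
proof
  fix R assume "R \<in> {R. \<not> has_path_of_length_ge n (G \<union> R) (c * real n)}"
  then have np: "\<not> has_path_of_length_ge n (G \<union> R) (c * real n)" by simp
  obtain S T U where v: "valid n (G \<union> R) S T U" and cST: "card S = card T"
    and lU: "real (length U) < c * real n + 1"
    using dfs_path[OF np] c n by auto
  have part: "S \<inter> T = {}" "S \<inter> set U = {}" "T \<inter> set U = {}" "S \<union> T \<union> set U = {..<n}" "distinct U"
    and ne: "\<forall>s\<in>S. \<forall>t\<in>T. {s, t} \<notin> G \<union> R"
    using v unfolding valid_def by auto
  have fin: "finite S" "finite T" using part(4) by (metis finite_Un finite_lessThan)+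
  have Ueq: "{..<n} - S - T = set U" using part by auto
  have cU: "card (set U) = length U" using part(5) by (simp add: distinct_card)
  have sum: "card S + card T + length U = n"
  proof -
    have "card (S \<union> T \<union> set U) = card S + card T + card (set U)"
    proof -
      have "card (S \<union> T) = card S + card T" using part(1) fin by (simp add: card_Un_disjoint)
      moreover have "(S \<union> T) \<inter> set U = {}" using part by auto
      ultimately show ?thesis using fin by (simp add: card_Un_disjoint)
    qed
    then show ?thesis using part(4) cU by simp
  qed
  have "real (card S) + real (card T) + real (length U) = real n" using sum by (metis of_nat_add)
  then have cS: "real (card S) = (real n - real (length U)) / 2" using cST by simp
  have lb: "(real n - c * real n - 1) / 2 \<le> real (card S)" using cS lU by simp
  have lb0: "0 \<le> (real n - c * real n - 1) / 2"
  proof -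
    have "c * real n \<le> (1/2) * real n" using c by (intro mult_right_mono) auto
    moreover have "real n \<ge> 6" using n by simp
    ultimately have "0 \<le> real n - c * real n - 1" by linarith
    then show ?thesis by simp
  qed
  have Tne: "T \<noteq> {}"
  proof
    assume "T = {}"
    then have "real (card S) = 0" using cST by simp
    moreover have "c * real n \<le> (1/2) * real n" using c by (intro mult_right_mono) auto
    moreover have "real n \<ge> 6" using n by simp
    ultimately have "(real n - c * real n - 1) / 2 \<le> 0" "0 < real n - c * real n - 1" using lb by linarith+
    then show False by simp
  qed
  have "(S, T) \<in> FF n G (c * real n + 1) (((real n - c * real n - 1) / 2)^2)"
    unfolding FF_def
  proof (clarify, intro conjI)
    show "S \<subseteq> {..<n}" "T \<subseteq> {..<n}" using part by auto
    show "S \<inter> T = {}" by (rule part(1))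
    show "real (card ({..<n} - S - T)) < c * real n + 1" using Ueq cU lU by simp
    show "T \<noteq> {}" by (rule Tne)
    show "\<forall>s\<in>S. \<forall>t\<in>T. {s, t} \<notin> G" using ne by auto
    show "((real n - c * real n - 1) / 2)\<^sup>2 \<le> real (card S) * real (card T)"
    proof -
      have "((real n - c * real n - 1) / 2) * ((real n - c * real n - 1) / 2) \<le> real (card S) * real (card S)"
        using lb lb0 by (intro mult_mono) auto
      then show ?thesis using cST by (simp add: power2_eq_square)
    qed
  qed
  moreover have "\<forall>s\<in>S. \<forall>t\<in>T. {s, t} \<notin> R" using ne by auto
  ultimately show "R \<in> (\<Union>(S, T)\<in>FF n G (c * real n + 1) (((real n - c * real n - 1) / 2)^2).
            {R. \<forall>s\<in>S. \<forall>t\<in>T. {s, t} \<notin> R})" by blast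
qed



lemma arith_bound:
  fixes \<epsilon> \<Delta> x c K :: real
  assumes eps: "\<epsilon> > 0" and D: "\<Delta> > 0" and x: "0 < x" "x \<le> 1" "x \<le> \<epsilon> / 144"
    and K: "K = ln (1 / x) + \<Delta> * ln 2" and c: "0 \<le> c" "c \<le> 1/2" "c * K \<le> \<epsilon> / 144"
    and n: "n \<ge> 6"
  shows "x powr (- (c * real n + 1)) * (1 + x) ^ n * 2 powr (\<Delta> * (c * real n + 1))
          * exp (- (\<epsilon> / real n) * (((real n - c * real n - 1) / 2)^2)) \<le> exp (K - \<epsilon> * real n / 72)"
proof -
  define L where "L = c * real n + 1"
  have rn: "real n \<ge> 6" using n by simp
  have e1: "x powr (- L) = exp (L * ln (1 / x))" using x by (simp add: powr_def ln_div)
  have e2: "2 powr (\<Delta> * L) = exp (\<Delta> * L * ln 2)" by (simp add: powr_def)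
  have e3: "(1 + x) ^ n \<le> exp (real n * x)"
  proof -
    have "(1 + x) ^ n \<le> exp x ^ n" using x by (intro power_mono) (auto simp: exp_ge_add_one_self add.commute)
    then show ?thesis by (simp add: exp_of_nat_mult)
  qed
  have hA: "real n / 6 \<le> (real n - c * real n - 1) / 2"
  proof -
    have "c * real n \<le> (1/2) * real n" using c by (intro mult_right_mono) auto
    then have "real n / 3 \<le> real n - c * real n - 1" using rn by linarith
    then show ?thesis by simp
  qed
  have "(real n / 6)^2 \<le> ((real n - c * real n - 1) / 2)^2"
    using hA rn by (intro power_mono) auto
  then have "(\<epsilon> / real n) * (real n / 6)^2 \<le> (\<epsilon> / real n) * ((real n - c * real n - 1) / 2)^2"
    using eps rn by (intro mult_left_mono) auto
  moreover have "(\<epsilon> / real n) * (real n / 6)^2 = \<epsilon> * real n / 36" using rn by (simp add: power2_eq_square)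
  ultimately have "\<epsilon> * real n / 36 \<le> (\<epsilon> / real n) * ((real n - c * real n - 1) / 2)^2" by linarith
  then have e4: "exp (- (\<epsilon> / real n) * (((real n - c * real n - 1) / 2)^2)) \<le> exp (- (\<epsilon> * real n / 36))"
    by (subst exp_le_cancel_iff) linarith
  have lhs: "x powr (- L) * (1 + x) ^ n * 2 powr (\<Delta> * L) * exp (- (\<epsilon> / real n) * (((real n - c * real n - 1) / 2)^2))
      \<le> exp (L * ln (1 / x)) * exp (real n * x) * exp (\<Delta> * L * ln 2) * exp (- (\<epsilon> * real n / 36))"
    unfolding e1 e2 using e3 e4 x by (intro mult_mono) auto
  also have "\<dots> = exp (L * K + real n * x - \<epsilon> * real n / 36)"
    unfolding K by (simp add: exp_add[symmetric] algebra_simps exp_diff)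
  also have "\<dots> \<le> exp (K - \<epsilon> * real n / 72)"
  proof -
    have "c * K * real n \<le> \<epsilon> / 144 * real n" using c rn by (intro mult_right_mono) auto
    moreover have "real n * x \<le> real n * (\<epsilon> / 144)" using x rn by (intro mult_left_mono) auto
    ultimately have "L * K + real n * x - \<epsilon> * real n / 36 \<le> K - \<epsilon> * real n / 72"
      unfolding L_def by (simp add: algebra_simps)
    then show ?thesis by simp
  qed
  finally show ?thesis unfolding L_def .
qed



lemma key:
  fixes \<epsilon> \<Delta> x c K :: real
  assumes eps: "\<epsilon> > 0" and D: "\<Delta> > 0" and x: "0 < x" "x \<le> 1" "x \<le> \<epsilon> / 144"
    and K: "K = ln (1 / x) + \<Delta> * ln 2" and c: "0 \<le> c" "c \<le> 1/2" "c * K \<le> \<epsilon> / 144"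
    and n: "n \<ge> 6" "real n \<ge> \<epsilon>"
    and G: "is_graph n G" "connected_graph n G" "max_degree_le n G \<Delta>"
  shows "1 - exp (K - \<epsilon> * real n / 72)
     \<le> measure_pmf.prob (gnp n (\<epsilon> / real n)) {R. has_path_of_length_ge n (G \<union> R) (c * real n)}"
proof -
  define p where "p = \<epsilon> / real n"
  define L where "L = c * real n + 1"
  define A where "A = ((real n - c * real n - 1) / 2)^2"
  define F where "F = FF n G L A"
  define ev where "ev = (\<lambda>(S, T). {R. \<forall>s\<in>S. \<forall>t\<in>T. {s, t::nat} \<notin> R})"
  define bad where "bad = {R. \<not> has_path_of_length_ge n (G \<union> R) (c * real n)}"
  have rn: "real n \<ge> 6" using n by simp
  have p: "0 \<le> p" "p \<le> 1" using eps n rn unfolding p_def by auto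
  have sub: "bad \<subseteq> (\<Union>ST\<in>F. ev ST)"
    using bad_subset[OF G(1) c(1,2) n(1)] unfolding bad_def F_def L_def A_def ev_def by simp
  have finF: "finite F"
  proof (rule finite_subset)
    show "F \<subseteq> Pow {..<n} \<times> Pow {..<n}" unfolding F_def FF_def by auto
  qed auto
  have "measure_pmf.prob (gnp n p) bad \<le> measure_pmf.prob (gnp n p) (\<Union>ST\<in>F. ev ST)"
    using sub by (intro measure_pmf.finite_measure_mono) auto
  also have "\<dots> \<le> (\<Sum>ST\<in>F. measure_pmf.prob (gnp n p) (ev ST))"
    using finF by (intro measure_UNION_le) auto
  also have "\<dots> \<le> (\<Sum>ST\<in>F. exp (- p * A))"
  proof (intro sum_mono)
    fix ST assume "ST \<in> F"
    then obtain S T where ST: "ST = (S, T)" and m: "(S, T) \<in> FF n G L A" unfolding F_def by (cases ST) auto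
    from m have m': "S \<subseteq> {..<n}" "T \<subseteq> {..<n}" "S \<inter> T = {}" "A \<le> real (card S) * real (card T)"
      unfolding FF_def by auto
    have "measure_pmf.prob (gnp n p) (ev ST) \<le> exp (- p * (real (card S) * real (card T)))"
      unfolding ST ev_def using prob_no_edge[OF m'(1-3) p] by simp
    also have "\<dots> \<le> exp (- p * A)" using m'(4) p by (simp add: mult_left_mono)
    finally show "measure_pmf.prob (gnp n p) (ev ST) \<le> exp (- p * A)" .
  qed
  also have "\<dots> = real (card F) * exp (- p * A)" by simp
  also have "\<dots> \<le> (x powr (- L) * (1 + x) ^ n * 2 powr (\<Delta> * L)) * exp (- p * A)"
  proof (intro mult_right_mono)
    have "real (card F) \<le> real (card {U. U \<subseteq> {..<n} \<and> real (card U) < L}) * 2 powr (\<Delta> * L)"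
      unfolding F_def using card_FF[OF G(1,2,3)] D by simp
    also have "\<dots> \<le> (x powr (- L) * (1 + x) ^ n) * 2 powr (\<Delta> * L)"
      using count_small_subsets[OF x(1,2)] by (intro mult_right_mono) auto
    finally show "real (card F) \<le> x powr (- L) * (1 + x) ^ n * 2 powr (\<Delta> * L)" .
  qed auto
  also have "\<dots> \<le> exp (K - \<epsilon> * real n / 72)"
    using arith_bound[OF eps D x K c n(1)] unfolding L_def A_def p_def by simp
  finally have pb: "measure_pmf.prob (gnp n p) bad \<le> exp (K - \<epsilon> * real n / 72)" .
  have "{R. has_path_of_length_ge n (G \<union> R) (c * real n)} = space (measure_pmf (gnp n p)) - bad"
    unfolding bad_def by auto
  then have "measure_pmf.prob (gnp n p) {R. has_path_of_length_ge n (G \<union> R) (c * real n)}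
      = 1 - measure_pmf.prob (gnp n p) bad"
    using measure_pmf.prob_compl[of bad "gnp n p"] by simp
  then show ?thesis using pb unfolding p_def by simp
qed



lemma lim_aux:
  fixes \<epsilon> K :: real assumes "\<epsilon> > 0"
  shows "(\<lambda>n::nat. 1 - exp (K - \<epsilon> * real n / 72)) \<longlonglongrightarrow> 1"
  using assms by real_asymp

theorem theorem6:
  fixes \<epsilon> \<Delta> :: real
  assumes "\<epsilon> > 0" and "\<Delta> > 0"
  shows "\<exists>c>0. \<forall>G :: nat \<Rightarrow> nat set set.
           (\<forall>n. is_graph n (G n) \<and> connected_graph n (G n) \<and> max_degree_le n (G n) \<Delta>) \<longrightarrow>
           (\<lambda>n. measure_pmf.prob (gnp n (\<epsilon> / real n))
                   {R. has_path_of_length_ge n (G n \<union> R) (c * real n)}) \<longlonglongrightarrow> 1"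
proof -
  define x where "x = min 1 (\<epsilon> / 144)"
  define K where "K = ln (1 / x) + \<Delta> * ln 2"
  define c where "c = min (1/2) (\<epsilon> / (144 * (K + 1)))"
  have x: "0 < x" "x \<le> 1" "x \<le> \<epsilon> / 144" using assms unfolding x_def by auto
  have K0: "K \<ge> 0"
  proof -
    have "ln x \<le> 0" using x by simp
    moreover have "0 \<le> \<Delta> * ln 2" using assms by simp
    moreover have "ln (1 / x) = - ln x" using x by (simp add: ln_div)
    ultimately show ?thesis unfolding K_def by linarith
  qed
  have "0 < \<epsilon> / (144 * (K + 1))" using assms K0 by simp
  then have c: "0 < c" "c \<le> 1/2" unfolding c_def by linarith+
  have cK: "c * K \<le> \<epsilon> / 144"
  proof -
    have "c * K \<le> (\<epsilon> / (144 * (K + 1))) * K" using K0 unfolding c_def by (intro mult_right_mono) auto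
    also have "\<dots> = (\<epsilon> / 144) * (K / (K + 1))" using K0 by (simp add: field_simps)
    also have "\<dots> \<le> (\<epsilon> / 144) * 1" using K0 assms by (intro mult_left_mono) auto
    finally show ?thesis by simp
  qed
  show ?thesis
  proof (intro exI[of _ c] conjI allI impI)
    show "0 < c" by (rule c(1))
    fix G :: "nat \<Rightarrow> nat set set"
    assume G: "\<forall>n. is_graph n (G n) \<and> connected_graph n (G n) \<and> max_degree_le n (G n) \<Delta>"
    let ?f = "\<lambda>n. measure_pmf.prob (gnp n (\<epsilon> / real n)) {R. has_path_of_length_ge n (G n \<union> R) (c * real n)}"
    have ev: "eventually (\<lambda>n. 1 - exp (K - \<epsilon> * real n / 72) \<le> ?f n) sequentially"
    proof (rule eventually_sequentiallyI[of "max 6 (nat \<lceil>\<epsilon>\<rceil>)"])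
      fix n assume "max 6 (nat \<lceil>\<epsilon>\<rceil>) \<le> n"
      then have n: "n \<ge> 6" "real n \<ge> \<epsilon>" by linarith+
      show "1 - exp (K - \<epsilon> * real n / 72) \<le> ?f n"
        using key[OF assms x K_def less_imp_le[OF c(1)] c(2) cK n] G by blast
    qed
    show "?f \<longlonglongrightarrow> 1"
    proof (rule tendsto_sandwich[OF ev])
      show "eventually (\<lambda>n. ?f n \<le> 1) sequentially" by simp
      show "(\<lambda>n. 1 - exp (K - \<epsilon> * real n / 72)) \<longlonglongrightarrow> 1" by (rule lim_aux[OF assms(1)])
    qed simp
  qed
qed

end
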